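(* Let $\varepsilon\in(0,1)$, $4\pi/5<a<\pi$ and $t_0>2\pi$. Then there exists $v\in(0,1)$ such that $T_0(Q,\Omega)<\infty$, where $Q=\{(t,x): t\ge0,\ x\in\omega(t)\}$ with $\omega(t)=\{(r,\theta):1-\varepsilon<r\le1,\ \theta_0(t)<\theta<a+\theta_0(t)\}$, $\theta_0(t)=0$ for $0\le t<t_0$ and $\theta_0(t)=v(t-t_0)$ for $t\ge t_0$.
   Context: $\Omega=\{(x,y)\in\mathbb{R}^2:x^2+y^2<1\}$ is the Euclidean unit disk, with polar coordinates $(r,\theta)$ (angles mod $2\pi$; wave equation with Dirichlet boundary condition). Rays (projections of generalized bicharacteristics, parametrized by time) are the curves $t\mapsto x(t)\in\overline\Omega$, $t\in\mathbb{R}$: unit-speed billiard trajectories (straight segments at unit speed reflecting specularly at the unit circle) and unit-speed motions along the unit circle in either direction (gliding rays). $(Q,T)$ satisfies the time-dependent geometric control condition if every ray admits $t\in(0,T)$ with $(t,x(t))\in Q$; $T_0(Q,\Omega)$ is the infimum of such $T>0$, $+\infty$ if none. *)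

theory Defs
  imports "HOL-Analysis.Analysis" "HOL-Library.Extended_Real"
begin

definition billiard_ray :: "(real \<Rightarrow> complex) \<Rightarrow> bool" where
  "billiard_ray x \<longleftrightarrow>
     continuous_on UNIV x \<and> (\<forall>t. norm (x t) \<le> 1) \<and>
     (\<exists>R :: real set.
        (\<forall>t\<in>R. norm (x t) = 1) \<and>
        (\<forall>a b. finite (R \<inter> {a..b})) \<and>
        (\<forall>a b. a < b \<and> {a<..<b} \<inter> R = {} \<longrightarrow>
            (\<exists>p v. norm v = 1 \<and> (\<forall>t\<in>{a<..<b}. x t = p + t *\<^sub>R v))) \<and>
        (\<forall>t\<in>R. \<exists>vm vp. (x has_vector_derivative vm) (at_left t) \<and>
                         (x has_vector_derivative vp) (at_right t) \<and>
                         vp = vm - (2 * (vm \<bullet> x t)) *\<^sub>R x t))"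

definition gliding_ray :: "(real \<Rightarrow> complex) \<Rightarrow> bool" where
  "gliding_ray x \<longleftrightarrow> (\<exists>c s. (s = 1 \<or> s = -1) \<and> (\<forall>t. x t = cis (c + s * t)))"

definition ray :: "(real \<Rightarrow> complex) \<Rightarrow> bool" where
  "ray x \<longleftrightarrow> billiard_ray x \<or> gliding_ray x"

definition GCC :: "(real \<times> complex) set \<Rightarrow> real \<Rightarrow> bool" where
  "GCC Q T \<longleftrightarrow> (\<forall>x. ray x \<longrightarrow> (\<exists>t\<in>{0<..<T}. (t, x t) \<in> Q))"

text \<open>Minimal control time (infimum in the extended reals; +\<infinity> if no T works).\<close>
definition T0 :: "(real \<times> complex) set \<Rightarrow> ereal" where
  "T0 Q = Inf {ereal T | T. T > 0 \<and> GCC Q T}"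

definition theta0 :: "real \<Rightarrow> real \<Rightarrow> real \<Rightarrow> real" where
  "theta0 t0 v t = (if t < t0 then 0 else v * (t - t0))"

definition moving_set :: "real \<Rightarrow> real \<Rightarrow> real \<Rightarrow> real \<Rightarrow> (real \<times> complex) set" where
  "moving_set \<epsilon> a t0 v = {(t, x). t \<ge> 0 \<and> 1 - \<epsilon> < norm x \<and> norm x \<le> 1 \<and>
      (\<exists>\<theta>. theta0 t0 v t < \<theta> \<and> \<theta> < a + theta0 t0 v t \<and> x = complex_of_real (norm x) * cis \<theta>)}"

end

theory Submission
  imports Defs
begin


lemma HL_fwd:
  fixes c d a :: real and n :: nat
  assumes "0 < d" "d < a" "a < 2*pi" "2*pi - a < real n * d"
  shows "\<exists>k\<le>n. \<exists>m::int. 2*pi*m < c + real k * d \<and> c + real k * d < 2*pi*m + a"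
proof -
  define m where "m = \<lfloor>c/(2*pi)\<rfloor>"
  have p: "0 < 2*pi" by simp
  have f1: "real_of_int m \<le> c/(2*pi)" "c/(2*pi) < real_of_int m + 1" unfolding m_def by linarith+
  have m1: "2*pi*m \<le> c" using f1(1) p by (simp add: pos_le_divide_eq mult.commute)
  have m2: "c < 2*pi*(m+1)" using f1(2) p by (simp add: pos_divide_less_eq mult.commute)
  have n1: "n \<ge> 1" using assms by (cases n) auto
  show ?thesis
  proof (cases "c < 2*pi*m + a \<and> 2*pi*m < c")
    case True then show ?thesis by (rule_tac x=0 in exI) auto
  next
    case F: False
    show ?thesis
    proof (cases "c = 2*pi*m")
      case True
      then show ?thesis using n1 assms by (rule_tac x=1 in exI) (auto intro!: exI[of _ m])
    next
      case False
      with F m1 have ca: "c \<ge> 2*pi*m + a" by auto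
      have ex: "c + real n * d > 2*pi*(m+1)" using ca assms by (simp add: algebra_simps)
      define k where "k = (LEAST k. c + real k * d > 2*pi*(m+1))"
      have k1: "c + real k * d > 2*pi*(m+1)" unfolding k_def by (rule LeastI[of _ n]) (use ex in auto)
      have kn: "k \<le> n" unfolding k_def by (rule Least_le) (use ex in auto)
      have k0: "k \<noteq> 0" proof assume "k = 0" then show False using k1 m2 by simp qed
      have k2: "\<not> (c + real (k-1) * d > 2*pi*(m+1))"
        unfolding k_def by (rule not_less_Least) (use k0 k_def in auto)
      have "real (k-1) = real k - 1" using k0 by auto
      with k2 have "c + real k * d \<le> 2*pi*(m+1) + d" by (simp add: algebra_simps)
      then show ?thesis using k1 kn assms by (intro exI[of _ k] conjI exI[of _ "m+1"]) auto
    qed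
  qed
qed

lemma HL_bwd:
  fixes c d a :: real and n :: nat
  assumes "d < 0" "-d < a" "a < 2*pi" "2*pi - a < real n * (-d)"
  shows "\<exists>k\<le>n. \<exists>m::int. 2*pi*m < c + real k * d \<and> c + real k * d < 2*pi*m + a"
proof -
  obtain k and m::int where "k \<le> n" and h: "2*pi*m < (a - c) + real k * (-d)" "(a - c) + real k * (-d) < 2*pi*m + a"
    using HL_fwd[of "-d" a n "a - c"] assms by auto
  then show ?thesis by (intro exI[of _ k] conjI exI[of _ "-m"]) (auto simp: algebra_simps)
qed

lemma HL:
  fixes c d a :: real and n :: nat
  assumes "d \<noteq> 0" "\<bar>d\<bar> < a" "a < 2*pi" "2*pi - a < real n * \<bar>d\<bar>"
  shows "\<exists>k\<le>n. \<exists>m::int. 2*pi*m < c + real k * d \<and> c + real k * d < 2*pi*m + a"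
  using HL_fwd[of d a n c] HL_bwd[of d a n c] assms by (cases "d > 0") auto

lemma hit:
  fixes m :: int
  assumes "0 < \<epsilon>" "0 \<le> t" "theta0 t0 v t < \<alpha> - 2*pi*m" "\<alpha> - 2*pi*m < a + theta0 t0 v t"
  shows "(t, cis \<alpha>) \<in> moving_set \<epsilon> a t0 v"
proof -
  have "cis (\<alpha> - 2*pi*m) = cis \<alpha> * inverse (cis (2*pi*m))" by (simp add: cis_divide[symmetric] divide_inverse)
  also have "cis (2*pi*m) = 1" using cos_int_2pin[of m] sin_int_2pin[of m] by (simp add: cis.ctr complex_eq_iff mult.commute)
  finally have "cis \<alpha> = complex_of_real (norm (cis \<alpha>)) * cis (\<alpha> - 2*pi*m)" by simp
  moreover have "norm (cis \<alpha>) = 1" by simp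
  ultimately show ?thesis using assms unfolding moving_set_def
    by (intro CollectI) (simp only: case_prod_conv, intro conjI exI[of _ "\<alpha> - 2*pi*m"], auto)
qed



lemma f3: "fact 3 = (6::real)" by (simp add: eval_nat_numeral)
lemma f5: "fact 5 = (120::real)" by (simp add: eval_nat_numeral)
lemma sc: "sin_coeff 0 = (0::real)" "sin_coeff 1 = (1::real)" "sin_coeff 2 = (0::real)" "sin_coeff 3 = (-1/6::real)" "sin_coeff 4 = (0::real)"
  by (simp_all add: sin_coeff_def f3)
lemma s5: "(\<Sum>m<5. f m) = f 0 + f 1 + f 2 + f 3 + (f 4::real)" for f :: "nat \<Rightarrow> real"
  by (simp add: eval_nat_numeral)
lemma s3: "(\<Sum>m<3. f m) = f 0 + f 1 + (f 2::real)" for f :: "nat \<Rightarrow> real"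
  by (simp add: eval_nat_numeral)

lemma sin_bounds:
  fixes x :: real assumes x: "0 \<le> x"
  shows "x - x^3/6 \<le> sin x" "sin x \<le> x - x^3/6 + x^5/120"
proof -
  have "\<bar>sin x - (\<Sum>m<3. sin_coeff m * x ^ m)\<bar> \<le> inverse (fact 3) * \<bar>x\<bar> ^ 3"
    by (rule Maclaurin_sin_bound)
  also have "(\<Sum>m<3. sin_coeff m * x ^ m) = x" unfolding s3 sc by simp
  also have "inverse (fact 3) * \<bar>x\<bar> ^ 3 = x^3/6" using x unfolding f3 by simp
  finally show "x - x^3/6 \<le> sin x" by linarith
  have "\<bar>sin x - (\<Sum>m<5. sin_coeff m * x ^ m)\<bar> \<le> inverse (fact 5) * \<bar>x\<bar> ^ 5"
    by (rule Maclaurin_sin_bound)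
  also have "(\<Sum>m<5. sin_coeff m * x ^ m) = x - x^3/6" unfolding s5 sc by simp
  also have "inverse (fact 5) * \<bar>x\<bar> ^ 5 = x^5/120" using x unfolding f5 by simp
  finally show "sin x \<le> x - x^3/6 + x^5/120" by linarith
qed

lemma sin_088: "(383/500) \<le> sin (22/25::real)" "sin (22/25::real) \<le> (771/1000)"
proof -
  have c3: "(22/25::real)^3 = 10648/15625" by (simp add: eval_nat_numeral)
  have c5: "(22/25::real)^5 = 5153632/9765625" by (simp add: eval_nat_numeral)
  have "(22/25::real) - 10648/15625/6 \<le> sin (22/25)" using sin_bounds(1)[of "22/25"] c3 by simp
  then show "(383/500) \<le> sin (22/25::real)" by linarith
  have "sin (22/25::real) \<le> (22/25) - 10648/15625/6 + 5153632/9765625/120" using sin_bounds(2)[of "22/25"] c3 c5 by simp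
  then show "sin (22/25::real) \<le> (771/1000)" by linarith
qed

lemma sin_lip: "\<bar>sin y - sin x\<bar> \<le> \<bar>y - x\<bar>" for x y :: real
proof -
  have "\<bar>sin y - sin x\<bar> = 2 * \<bar>sin ((y - x)/2)\<bar> * \<bar>cos ((y + x)/2)\<bar>"
    by (simp add: sin_diff_sin abs_mult)
  also have "\<dots> \<le> 2 * \<bar>(y - x)/2\<bar> * 1"
    by (intro mult_mono abs_sin_x_le_abs_x abs_cos_le_one) auto
  finally show ?thesis by simp
qed



lemma pi_bnds: "157/50 < pi" "pi < 3927/1250"
proof -
  have "(3141592653588 / 10 ^ 12::real) = 3141592653588 / 1000000000000" by simp
  moreover have "(31415926535899 / 10 ^ 13::real) = 31415926535899 / 10000000000000" by simp
  ultimately show "157/50 < pi" "pi < 3927/1250" using pi_approx by linarith+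
qed

lemma rot:
  fixes x :: "real \<Rightarrow> complex" and p :: nat and j :: int
  assumes eps: "0 < \<epsilon>" and a1: "4*pi/5 < a" and a2: "a < pi" and tt: "2*pi < t0"
    and s0: "0 < s" "s \<le> 3" and L: "0 < L" "L \<le> 2"
    and X: "\<forall>k::nat. x (s + real k * L) = cis (\<gamma> + real k * \<delta>)"
    and p: "p = 1 \<or> p = 2"
    and d: "d = real p * (\<delta> - v * L) - 2*pi*j" "d \<noteq> 0" "\<bar>d\<bar> < a" "L \<le> 20 * \<bar>d\<bar>"
  shows "\<exists>t\<in>{0<..<t0+200}. (t, x t) \<in> moving_set \<epsilon> a t0 v"
proof -
  note pb = pi_bnds
  define y where "y = (t0 - s)/L"
  have ypos: "0 < y" unfolding y_def using s0 tt L pb by (simp add: field_simps)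
  define k0 where "k0 = nat \<lceil>y\<rceil>"
  have k0r: "real k0 = real_of_int \<lceil>y\<rceil>" unfolding k0_def using ypos by simp
  have cy: "y \<le> real_of_int \<lceil>y\<rceil>" "real_of_int \<lceil>y\<rceil> < y + 1" by linarith+
  have k0a: "t0 \<le> s + real k0 * L"
  proof -
    have "t0 - s = y * L" unfolding y_def using L by simp
    also have "\<dots> \<le> real k0 * L" using cy(1) k0r L by (intro mult_right_mono) auto
    finally show ?thesis by simp
  qed
  have k0b: "s + real k0 * L < t0 + L"
  proof -
    have "real k0 * L < (y + 1) * L" using cy(2) k0r L by (intro mult_strict_right_mono) auto
    also have "\<dots> = t0 - s + L" unfolding y_def using L by (simp add: field_simps)
    finally show ?thesis by simp
  qed
  define X2 where "X2 = 2*pi - a"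
  have X2: "0 < X2" "X2 < 4" unfolding X2_def using a1 a2 pb by linarith+
  have dpos: "0 < \<bar>d\<bar>" using d(2) by simp
  define n where "n = nat \<lfloor>X2/\<bar>d\<bar>\<rfloor> + 1"
  have fl: "real_of_int \<lfloor>X2/\<bar>d\<bar>\<rfloor> \<le> X2/\<bar>d\<bar>" "X2/\<bar>d\<bar> < real_of_int \<lfloor>X2/\<bar>d\<bar>\<rfloor> + 1" by linarith+
  have flp: "0 \<le> \<lfloor>X2/\<bar>d\<bar>\<rfloor>" using X2 dpos by simp
  have nr: "real n = real_of_int \<lfloor>X2/\<bar>d\<bar>\<rfloor> + 1" unfolding n_def using flp by simp
  have n1: "X2 < real n * \<bar>d\<bar>" using fl(2) nr dpos by (simp add: field_simps)
  have n2: "real n \<le> X2/\<bar>d\<bar> + 1" using fl(1) nr by simp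
  define c where "c = \<gamma> + real k0 * \<delta> - v * (s + real k0 * L - t0)"
  have hl: "\<exists>k\<le>n. \<exists>m::int. 2*pi*m < c + real k * d \<and> c + real k * d < 2*pi*m + a"
    by (rule HL) (use d(2,3) a2 n1 X2_def pi_gt_zero in auto)
  then obtain i and m :: int where i: "i \<le> n" and m: "2*pi*m < c + real i * d" "c + real i * d < 2*pi*m + a"
    by blast
  define t where "t = s + real (k0 + p*i) * L"
  have xt: "x t = cis (\<gamma> + real (k0 + p*i) * \<delta>)" unfolding t_def using X by blast
  have "0 \<le> real (p*i) * L" using L by simp
  then have tge: "t0 \<le> t" unfolding t_def using k0a by (simp only: of_nat_add distrib_right)
  have pr: "real p \<le> 2" using p by auto
  have "real n * L \<le> (X2/\<bar>d\<bar> + 1) * L" using n2 L by (intro mult_right_mono) auto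
  also have "\<dots> = X2 * (L/\<bar>d\<bar>) + L" by (simp add: field_simps)
  also have "\<dots> \<le> X2 * 20 + L"
  proof -
    have "L/\<bar>d\<bar> \<le> 20" using d(4) dpos by (simp add: divide_le_eq)
    then show ?thesis using X2 by (intro add_right_mono mult_left_mono) auto
  qed
  finally have nL: "real n * L \<le> X2 * 20 + L" .
  have "real (p*i) \<le> real (p * n)" using i by (intro of_nat_mono mult_le_mono2)
  then have "real (p*i) * L \<le> real (p * n) * L" using L by (intro mult_right_mono) auto
  also have "\<dots> = real p * (real n * L)" by simp
  also have "\<dots> \<le> 2 * (X2 * 20 + L)" using pr nL X2 L by (intro mult_mono) auto
  finally have piL: "real (p*i) * L \<le> 2 * (X2 * 20 + L)" .
  have tlt: "t < t0 + 200" unfolding t_def using k0b piL X2 L by (simp add: algebra_simps)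
  have th: "theta0 t0 v t = v * (t - t0)" unfolding theta0_def using tge by simp
  have key0: "(\<gamma> + real (k0 + p*i) * \<delta>) - 2*pi*(m + int i * j) - v * (t - t0) = c + real i * d - 2*pi*m"
    unfolding t_def c_def d(1) by (simp add: algebra_simps)
  have key: "(\<gamma> + real (k0 + p*i) * \<delta>) - 2*pi*(m + int i * j) - theta0 t0 v t = c + real i * d - 2*pi*m"
    using key0 th by simp
  have "(t, cis (\<gamma> + real (k0 + p*i) * \<delta>)) \<in> moving_set \<epsilon> a t0 v"
    by (rule hit[OF eps, where m = "m + int i * j"]) (use tge tt pb key m in linarith)+
  moreover have "t \<in> {0<..<t0+200}" using tge tt pb tlt by simp
  ultimately show ?thesis using xt by (intro bexI[of _ t]) simp_all
qed

lemma stat: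
  fixes x :: "real \<Rightarrow> complex" and j :: int
  assumes eps: "0 < \<epsilon>" and a1: "4*pi/5 < a" and a2: "a < pi" and tt: "2*pi < t0"
    and s0: "0 < s" and L: "0 < L"
    and X: "\<forall>k::nat. x (s + real k * L) = cis (\<gamma> + real k * \<delta>)"
    and d: "d = \<delta> - 2*pi*j" "d \<noteq> 0" "\<bar>d\<bar> < a" "2*pi - a < 3 * \<bar>d\<bar>"
    and sL: "s + 3 * L < t0"
  shows "\<exists>t\<in>{0<..<t0+200}. (t, x t) \<in> moving_set \<epsilon> a t0 v"
proof -
  have hl: "\<exists>k\<le>3. \<exists>m::int. 2*pi*m < \<gamma> + real k * d \<and> \<gamma> + real k * d < 2*pi*m + a"
    by (rule HL) (use d a2 pi_gt_zero in auto)
  then obtain k and m :: int where k: "k \<le> 3" and m: "2*pi*m < \<gamma> + real k * d" "\<gamma> + real k * d < 2*pi*m + a"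
    by blast
  define t where "t = s + real k * L"
  have xt: "x t = cis (\<gamma> + real k * \<delta>)" unfolding t_def using X by blast
  have "real k * L \<le> 3 * L" using k L by (intro mult_right_mono) auto
  then have tlt: "t < t0" unfolding t_def using sL by simp
  have "0 \<le> real k * L" using L by simp
  then have tpos: "0 < t" unfolding t_def using s0 by simp
  have th: "theta0 t0 v t = 0" unfolding theta0_def using tlt by simp
  have key: "(\<gamma> + real k * \<delta>) - 2*pi*(m + int k * j) - theta0 t0 v t = \<gamma> + real k * d - 2*pi*m"
    unfolding th d(1) by (simp add: algebra_simps)
  have "(t, cis (\<gamma> + real k * \<delta>)) \<in> moving_set \<epsilon> a t0 v"
    by (rule hit[OF eps, where m = "m + int k * j"]) (use tpos key m in linarith)+
  moreover have "t \<in> {0<..<t0+200}" using tpos tlt by simp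
  ultimately show ?thesis using xt by (intro bexI[of _ t]) simp_all
qed



lemma chord:
  fixes x :: "real \<Rightarrow> complex"
  assumes cont: "continuous_on UNIV x" and tt: "t < t2" and aff: "\<forall>\<tau>\<in>{t<..<t2}. x \<tau> = p + \<tau> *\<^sub>R q"
  shows "x t = p + t *\<^sub>R q" "x t2 = p + t2 *\<^sub>R q"
    "(x has_vector_derivative q) (at_right t)" "(x has_vector_derivative q) (at_left t2)"
proof -
  let ?g = "\<lambda>\<tau>. p + \<tau> *\<^sub>R q"
  have gc: "continuous_on UNIV ?g" by (intro continuous_intros)
  have e1: "\<forall>\<^sub>F \<tau> in at_right t. x \<tau> = ?g \<tau>"
    unfolding eventually_at_right[OF tt] using aff tt by (intro exI[of _ t2]) auto
  have e2: "\<forall>\<^sub>F \<tau> in at_left t2. x \<tau> = ?g \<tau>"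
    unfolding eventually_at_left[OF tt] using aff tt by (intro exI[of _ t]) auto
  have xl1: "(x \<longlongrightarrow> x t) (at_right t)" using cont
    by (meson UNIV_I continuous_on_def filterlim_at_split tendsto_within_open open_UNIV)
  have gl1: "(?g \<longlongrightarrow> ?g t) (at_right t)" by (intro tendsto_intros)
  have "(x \<longlongrightarrow> ?g t) (at_right t)" using tendsto_cong[OF e1] gl1 by simp
  then show A: "x t = ?g t" using xl1 tendsto_unique[OF trivial_limit_at_right_real] by blast
  have xl2: "(x \<longlongrightarrow> x t2) (at_left t2)" using cont
    by (meson UNIV_I continuous_on_def filterlim_at_split tendsto_within_open open_UNIV)
  have gl2: "(?g \<longlongrightarrow> ?g t2) (at_left t2)" by (intro tendsto_intros)
  have "(x \<longlongrightarrow> ?g t2) (at_left t2)" using tendsto_cong[OF e2] gl2 by simp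
  then show B: "x t2 = ?g t2" using xl2 tendsto_unique[OF trivial_limit_at_left_real] by blast
  have gd: "\<And>y S. (?g has_vector_derivative q) (at y within S)"
    unfolding has_vector_derivative_def
    by (auto intro!: derivative_eq_intros)
  have "(x has_vector_derivative q) (at t within {t..})"
    by (rule has_vector_derivative_transform_within[OF gd, of "t2 - t"])
       (use tt aff A in \<open>auto simp: dist_real_def le_less\<close>)
  then show "(x has_vector_derivative q) (at_right t)"
    by (rule has_vector_derivative_within_subset) auto
  have "(x has_vector_derivative q) (at t2 within {..t2})"
    by (rule has_vector_derivative_transform_within[OF gd, of "t2 - t"])
       (use tt aff B in \<open>auto simp: dist_real_def le_less\<close>)
  then show "(x has_vector_derivative q) (at_left t2)"
    by (rule has_vector_derivative_within_subset) auto
qed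

lemma refl_alg:
  fixes P u :: complex and L :: real
  assumes nP: "norm P = 1" and nu: "norm u = 1" and nQ: "norm (P + L *\<^sub>R (u*P)) = 1" and L: "L > 0"
  shows "L = -2 * Re u" "P + L *\<^sub>R (u*P) = -(u^2) * P"
    "(u*P) - (2 * ((u*P) \<bullet> (-(u^2) * P))) *\<^sub>R (-(u^2) * P) = u * (-(u^2) * P)"
proof -
  obtain a b where u: "u = Complex a b" by (cases u)
  obtain c d where P: "P = Complex c d" by (cases P)
  have ab: "a^2 + b^2 = 1" using nu u by (simp add: cmod_def)
  have cd: "c^2 + d^2 = 1" using nP P by (simp add: cmod_def)
  have "sqrt ((c + L*(a*c - b*d))^2 + (d + L*(a*d+b*c))^2) = 1"
    using nQ u P by (simp add: cmod_def scaleR_conv_of_real algebra_simps)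
  then have e: "(c + L*(a*c - b*d))^2 + (d + L*(a*d+b*c))^2 = 1"
    by (metis real_sqrt_eq_1_iff)
  have "(c + L*(a*c - b*d))^2 + (d + L*(a*d+b*c))^2 = (c^2+d^2)*(1 + 2*L*a + L^2*(a^2+b^2))"
    by algebra
  then have "1 + 2*L*a + L^2 = 1" using e ab cd by simp
  then have "L * (L + 2*a) = 0" by (simp add: algebra_simps power2_eq_square)
  then show La: "L = -2 * Re u" using L u by simp
  show "P + L *\<^sub>R (u*P) = -(u^2) * P"
    using La ab unfolding u P by (simp add: complex_eq_iff scaleR_conv_of_real power2_eq_square algebra_simps)
       (use ab in algebra)?
  show "(u*P) - (2 * ((u*P) \<bullet> (-(u^2) * P))) *\<^sub>R (-(u^2) * P) = u * (-(u^2) * P)"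
    unfolding u P inner_complex_def
    apply (simp add: complex_eq_iff scaleR_conv_of_real power2_eq_square algebra_simps)
    apply (intro conjI)
    using ab cd by algebra+
qed


locale bray =
  fixes x :: "real \<Rightarrow> complex" and R :: "real set"
  assumes cont: "continuous_on UNIV x" and N: "\<And>t. norm (x t) \<le> 1"
    and R1: "\<And>t. t \<in> R \<Longrightarrow> norm (x t) = 1"
    and LF: "\<And>a b. finite (R \<inter> {a..b})"
    and AFF: "\<And>a b. a < b \<Longrightarrow> {a<..<b} \<inter> R = {} \<Longrightarrow>
                 (\<exists>p v. norm v = 1 \<and> (\<forall>t\<in>{a<..<b}. x t = p + t *\<^sub>R v))"
    and REF: "\<And>t. t \<in> R \<Longrightarrow> \<exists>vm vp. (x has_vector_derivative vm) (at_left t) \<and>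
                         (x has_vector_derivative vp) (at_right t) \<and>
                         vp = vm - (2 * (vm \<bullet> x t)) *\<^sub>R x t"
begin

lemma exists_R:
  assumes "a + 3 \<le> b" shows "\<exists>r\<in>R. a < r \<and> r < b"
proof (rule ccontr)
  assume "\<not> ?thesis"
  then have "{a<..<b} \<inter> R = {}" by auto
  then obtain p q where q: "norm q = 1" and aff: "\<forall>t\<in>{a<..<b}. x t = p + t *\<^sub>R q"
    using AFF[of a b] assms by auto
  have "x (a + 11/4) - x (a + 1/4) = (a + 11/4) *\<^sub>R q - (a + 1/4) *\<^sub>R q"
    using aff assms by simp
  also have "\<dots> = ((a + 11/4) - (a + 1/4)) *\<^sub>R q" by (simp only: scaleR_diff_left)
  finally have "x (a + 11/4) - x (a + 1/4) = (5/2) *\<^sub>R q" by simp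
  then have "norm (x (a + 11/4) - x (a + 1/4)) = 5/2" using q by simp
  moreover have "norm (x (a + 11/4) - x (a + 1/4)) \<le> 2"
    using norm_triangle_ineq4[of "x (a + 11/4)" "x (a + 1/4)"] N[of "a+11/4"] N[of "a+1/4"] by linarith
  ultimately show False by simp
qed

lemma next_R:
  assumes "t \<in> R" shows "\<exists>t2\<in>R. t < t2 \<and> {t<..<t2} \<inter> R = {}"
proof -
  define F where "F = R \<inter> {t<..<t+3}"
  have fin: "finite F" unfolding F_def by (rule finite_subset[OF _ LF[of t "t+3"]]) auto
  have ne: "F \<noteq> {}" using exists_R[of t "t+3"] unfolding F_def by auto
  define t2 where "t2 = Min F"
  have t2F: "t2 \<in> F" unfolding t2_def using fin ne by simp
  have "{t<..<t2} \<inter> R = {}"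
  proof (rule ccontr)
    assume "{t<..<t2} \<inter> R \<noteq> {}"
    then obtain r where r: "r \<in> R" "t < r" "r < t2" by auto
    then have "r \<in> F" using t2F unfolding F_def by auto
    then have "t2 \<le> r" unfolding t2_def using fin by simp
    then show False using r by simp
  qed
  then show ?thesis using t2F unfolding F_def by auto
qed

lemma step:
  assumes tR: "t \<in> R" and d: "(x has_vector_derivative (u * x t)) (at_right t)"
  shows "norm u = 1" "Re u < 0" "t - 2 * Re u \<in> R" "x (t - 2 * Re u) = -(u^2) * x t"
    "(x has_vector_derivative (u * x (t - 2 * Re u))) (at_right (t - 2 * Re u))"
proof -
  obtain t2 where t2R: "t2 \<in> R" and tt: "t < t2" and emp: "{t<..<t2} \<inter> R = {}"
    using next_R[OF tR] by auto
  obtain p q where q: "norm q = 1" and aff: "\<forall>\<tau>\<in>{t<..<t2}. x \<tau> = p + \<tau> *\<^sub>R q"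
    using AFF[OF tt emp] by auto
  note ch = chord[OF cont tt aff]
  have uq: "u * x t = q"
    using vector_derivative_unique_within[OF trivial_limit_at_right_real d ch(3)] .
  have nP: "norm (x t) = 1" using R1[OF tR] .
  have nQ: "norm (x t2) = 1" using R1[OF t2R] .
  have "norm (u * x t) = 1" using uq q by simp
  then show nu: "norm u = 1" using nP by (simp add: norm_mult)
  define L where "L = t2 - t"
  have L0: "L > 0" using tt L_def by simp
  have Qe: "x t2 = x t + L *\<^sub>R (u * x t)"
    using ch(1,2) uq unfolding L_def by (simp add: algebra_simps)
  note A = refl_alg[OF nP nu, of L, folded Qe, OF nQ L0]
  have t2e: "t2 = t - 2 * Re u" using A(1) L_def by simp
  show "Re u < 0" using A(1) L0 by simp
  show "t - 2 * Re u \<in> R" using t2R t2e by simp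
  have Qe2: "x t2 = -(u^2) * x t" using A(2) Qe by simp
  show "x (t - 2 * Re u) = -(u^2) * x t" using Qe2 t2e by simp
  obtain vm vp where vm: "(x has_vector_derivative vm) (at_left t2)"
    and vp: "(x has_vector_derivative vp) (at_right t2)"
    and vpe: "vp = vm - (2 * (vm \<bullet> x t2)) *\<^sub>R x t2"
    using REF[OF t2R] by auto
  have "vm = q" using vector_derivative_unique_within[OF trivial_limit_at_left_real vm ch(4)] .
  then have "vp = u * x t2" using vpe A(3) uq Qe2 by simp
  then show "(x has_vector_derivative (u * x (t - 2 * Re u))) (at_right (t - 2 * Re u))"
    using vp t2e by simp
qed

lemma iter:
  assumes tR: "t \<in> R" and d: "(x has_vector_derivative (u * x t)) (at_right t)"
  shows "t + real k * (-2 * Re u) \<in> R \<and> x (t + real k * (-2 * Re u)) = (-(u^2))^k * x t \<and>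
    (x has_vector_derivative (u * x (t + real k * (-2 * Re u)))) (at_right (t + real k * (-2 * Re u)))"
proof (induction k)
  case 0 then show ?case using assms by simp
next
  case (Suc k)
  let ?s = "t + real k * (-2 * Re u)"
  have e: "t + real (Suc k) * (-2 * Re u) = ?s - 2 * Re u" by (simp add: algebra_simps)
  have I1: "?s \<in> R" and I2: "x ?s = (-(u^2))^k * x t"
    and I3: "(x has_vector_derivative (u * x ?s)) (at_right ?s)" using Suc.IH by auto
  note S = step[OF I1 I3]
  have "x (?s - 2 * Re u) = (-(u^2))^Suc k * x t" using S(4) I2 by simp
  then show ?case unfolding e using S(3,5) by simp
qed

end



lemma billiard_structure:
  assumes "billiard_ray x"
  shows "\<exists>s L \<gamma> \<phi>. 0 < \<phi> \<and> \<phi> < pi \<and> L = 2 * sin \<phi> \<and> 0 < s \<and> s \<le> L \<and>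
           (\<forall>k::nat. x (s + real k * L) = cis (\<gamma> + real k * (2*\<phi>)))"
proof -
  have c1: "continuous_on UNIV x" using assms unfolding billiard_ray_def by (rule conjunct1)
  have c2: "\<forall>t. norm (x t) \<le> 1" using assms unfolding billiard_ray_def by (rule conjunct1[OF conjunct2])
  have ex: "\<exists>R :: real set.
        (\<forall>t\<in>R. norm (x t) = 1) \<and>
        (\<forall>a b. finite (R \<inter> {a..b})) \<and>
        (\<forall>a b. a < b \<and> {a<..<b} \<inter> R = {} \<longrightarrow>
            (\<exists>p v. norm v = 1 \<and> (\<forall>t\<in>{a<..<b}. x t = p + t *\<^sub>R v))) \<and>
        (\<forall>t\<in>R. \<exists>vm vp. (x has_vector_derivative vm) (at_left t) \<and>
                         (x has_vector_derivative vp) (at_right t) \<and>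
                         vp = vm - (2 * (vm \<bullet> x t)) *\<^sub>R x t)"
    using assms unfolding billiard_ray_def by (rule conjunct2[OF conjunct2])
  then obtain R where h1: "\<forall>t\<in>R. norm (x t) = 1" and h2: "\<forall>a b. finite (R \<inter> {a..b})"
    and h3: "\<forall>a b. a < b \<and> {a<..<b} \<inter> R = {} \<longrightarrow>
            (\<exists>p v. norm v = 1 \<and> (\<forall>t\<in>{a<..<b}. x t = p + t *\<^sub>R v))"
    and h4: "\<forall>t\<in>R. \<exists>vm vp. (x has_vector_derivative vm) (at_left t) \<and>
                         (x has_vector_derivative vp) (at_right t) \<and>
                         vp = vm - (2 * (vm \<bullet> x t)) *\<^sub>R x t"
    by blast
  have "bray x R"
  proof
    show "continuous_on UNIV x" by (rule c1)
    show "\<And>t. norm (x t) \<le> 1" using c2 by blast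
    show "\<And>t. t \<in> R \<Longrightarrow> norm (x t) = 1" using h1 by blast
    show "\<And>a b. finite (R \<inter> {a..b})" using h2 by blast
    show "\<And>a b. a < b \<Longrightarrow> {a<..<b} \<inter> R = {} \<Longrightarrow>
                 (\<exists>p v. norm v = 1 \<and> (\<forall>t\<in>{a<..<b}. x t = p + t *\<^sub>R v))"
      by (rule h3[rule_format, OF conjI])
    show "\<And>t. t \<in> R \<Longrightarrow> \<exists>vm vp. (x has_vector_derivative vm) (at_left t) \<and>
                         (x has_vector_derivative vp) (at_right t) \<and>
                         vp = vm - (2 * (vm \<bullet> x t)) *\<^sub>R x t" by (rule h4[rule_format])
  qed
  then interpret bray x R .
  obtain t where tR: "t \<in> R" and t0: "t < 0" using exists_R[of "-3" 0] by auto
  obtain vm vp where vp: "(x has_vector_derivative vp) (at_right t)" using REF[OF tR] by auto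
  have nP: "norm (x t) = 1" using R1[OF tR] .
  then have xt0: "x t \<noteq> 0" by auto
  define u where "u = vp / x t"
  have vpu: "vp = u * x t" unfolding u_def using xt0 by simp
  note d = vp[unfolded vpu]
  note st = step[OF tR d]
  note it = iter[OF tR d]
  define L where "L = -2 * Re u"
  have L0: "L > 0" using st(2) L_def by simp
  have nu: "(Re u)^2 + (Im u)^2 = 1" using st(1) by (simp add: cmod_def)
  have Iu: "-1 \<le> Im u" "Im u \<le> 1" using abs_Im_le_cmod[of u] st(1) by linarith+
  define \<phi> where "\<phi> = arccos (Im u)"
  have c\<phi>: "cos \<phi> = Im u" unfolding \<phi>_def using Iu by (simp add: cos_arccos)
  have "sin \<phi> = sqrt (1 - (Im u)^2)" unfolding \<phi>_def using Iu by (simp add: sin_arccos)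
  also have "1 - (Im u)^2 = (Re u)^2" using nu by linarith
  also have "sqrt ((Re u)^2) = \<bar>Re u\<bar>" by (rule real_sqrt_abs)
  also have "\<bar>Re u\<bar> = - Re u" using st(2) by simp
  finally have s\<phi>: "sin \<phi> = - Re u" .
  have p1: "0 \<le> \<phi>" "\<phi> \<le> pi" unfolding \<phi>_def using Iu by (auto intro: arccos_lbound arccos_ubound)
  have p2: "0 < \<phi>" "\<phi> < pi" using p1 s\<phi> st(2) by (auto simp: le_less) 
  have Le: "L = 2 * sin \<phi>" using s\<phi> L_def by simp
  have cd: "cos (2*\<phi>) = (Im u)^2 - (Re u)^2" unfolding cos_double c\<phi> s\<phi> by simp
  have sd: "sin (2*\<phi>) = -(2 * Re u * Im u)" unfolding sin_double c\<phi> s\<phi> by simp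
  have rho: "-(u^2) = cis (2*\<phi>)"
    unfolding complex_eq_iff cis.sel cd sd by (simp add: power2_eq_square)
  define \<gamma> where "\<gamma> = Arg (x t)"
  have xg: "x t = cis \<gamma>" unfolding \<gamma>_def using cis_Arg[OF xt0] nP by (simp add: sgn_div_norm)
  define k1 where "k1 = nat \<lfloor>-t/L\<rfloor> + 1"
  have fl: "real_of_int \<lfloor>-t/L\<rfloor> \<le> -t/L" "-t/L < real_of_int \<lfloor>-t/L\<rfloor> + 1" by linarith+
  have "0 \<le> -t/L" using t0 L0 by (intro divide_nonneg_pos) auto
  then have flp: "0 \<le> \<lfloor>-t/L\<rfloor>" by simp
  have k1r: "real k1 = real_of_int \<lfloor>-t/L\<rfloor> + 1" unfolding k1_def using flp by simp
  define s where "s = t + real k1 * L"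
  have s0: "0 < s" unfolding s_def k1r using fl(2) L0 by (simp add: field_simps)
  have "real_of_int \<lfloor>-t/L\<rfloor> * L \<le> (-t/L) * L" by (rule mult_right_mono[OF fl(1)]) (use L0 in simp)
  also have "(-t/L) * L = -t" using L0 by simp
  finally have sL: "s \<le> L" unfolding s_def k1r by (simp add: algebra_simps)
  have "\<forall>k::nat. x (s + real k * L) = cis ((\<gamma> + real k1 * (2*\<phi>)) + real k * (2*\<phi>))"
  proof
    fix k :: nat
    have "s + real k * L = t + real (k1 + k) * (-2 * Re u)" unfolding s_def L_def by (simp add: algebra_simps)
    then have "x (s + real k * L) = (-(u^2))^(k1+k) * x t" using it[of "k1+k"] by simp
    also have "\<dots> = cis (real (k1+k) * (2*\<phi>)) * cis \<gamma>" by (simp only: rho xg Complex.DeMoivre)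
    also have "\<dots> = cis (\<gamma> + real (k1+k) * (2*\<phi>))" unfolding cis_mult by (simp add: add.commute)
    finally show "x (s + real k * L) = cis ((\<gamma> + real k1 * (2*\<phi>)) + real k * (2*\<phi>))"
      by (simp add: algebra_simps)
  qed
  then show ?thesis using p2 Le s0 sL by blast
qed



lemma billiard_hit:
  fixes x :: "real \<Rightarrow> complex"
  assumes eps: "0 < \<epsilon>" and a1: "4*pi/5 < a" and a2: "a < pi" and tt: "2*pi < t0"
    and v: "v = 19/20"
    and ph: "0 < \<phi>" "\<phi> < pi" and Le: "L = 2 * sin \<phi>" and s0: "0 < s" "s \<le> L"
    and X: "\<forall>k::nat. x (s + real k * L) = cis (\<gamma> + real k * (2*\<phi>))"
  shows "\<exists>t\<in>{0<..<t0+200}. (t, x t) \<in> moving_set \<epsilon> a t0 v"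
proof -
  note pb = pi_bnds
  define \<psi> where "\<psi> = pi - \<phi>"
  have ps: "0 < \<psi>" "\<psi> < pi" using ph \<psi>_def by auto
  have sps: "sin \<phi> = sin \<psi>" unfolding \<psi>_def by simp
  have sp0: "0 < sin \<phi>" using sin_gt_zero ph by blast
  have sp1: "sin \<phi> \<le> 1" by simp
  have spx: "sin \<phi> \<le> \<phi>" using sin_x_le_x ph by simp
  have ssx: "sin \<psi> \<le> \<psi>" using sin_x_le_x ps by simp
  have L: "0 < L" "L \<le> 2" using Le sp0 sp1 by auto
  have s3: "s \<le> 3" using s0 L by simp
  have "7/10 \<le> \<psi> \<and> \<psi> \<le> 22/25 \<or> \<psi> < 7/10 \<or> 22/25 < \<psi>" by linarith
  then consider (S) "7/10 \<le> \<psi>" "\<psi> \<le> 22/25" | (N) "\<psi> < 7/10 \<or> 22/25 < \<psi>" by blast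
  then show ?thesis
  proof cases
    case S
    have "sin \<psi> \<le> sin (22/25)" by (rule sin_monotone_2pi_le) (use S pb in auto)
    then have sb: "sin \<psi> \<le> 771/1000" using sin_088 by linarith
    have "s + 3 * L < t0" using s0 Le sps sb tt pb by linarith
    have g1: "2*\<phi> - 2*pi = 2*\<phi> - 2*pi*real_of_int 1" by simp
    have dm: "2*\<phi> - 2*pi = -(2*\<psi>)" unfolding \<psi>_def by simp
    have ab: "\<bar>2*\<phi> - 2*pi\<bar> = 2*\<psi>" unfolding dm using ps by simp
    have g2: "2*\<phi> - 2*pi \<noteq> 0" unfolding dm using ps by simp
    have "2*\<psi> < a" using S a1 pb by linarith
    then have g3: "\<bar>2*\<phi> - 2*pi\<bar> < a" unfolding ab .
    have "2*pi - a < 3 * (2*\<psi>)" using S a1 pb by linarith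
    then have g4: "2*pi - a < 3 * \<bar>2*\<phi> - 2*pi\<bar>" unfolding ab .
    show ?thesis by (rule stat[OF eps a1 a2 tt s0(1) L(1) X g1 g2 g3 g4 \<open>s + 3 * L < t0\<close>])
  next
    case N
    define del where "del = 2*\<phi> - 2 * v * sin \<phi>"
    have dpos: "0 < del" unfolding del_def v using spx sp0 by linarith
    have dlt: "del < 2*pi" unfolding del_def v using ph sp0 by linarith
    have Lp: "L = 2 * sin \<psi>" using Le sps by simp
    have dle: "del = 2*pi - 2*\<psi> - (19/10) * sin \<psi>" unfolding del_def \<psi>_def v using sps \<psi>_def by simp
    have sp0': "0 < sin \<psi>" using sp0 sps by simp
    consider (R1) "del < a" | (R2) "2*pi - a < del" | (R3) "a \<le> del" "del \<le> 2*pi - a" by linarith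
    then show ?thesis
    proof cases
      case R1
      have f1: "del = real 1 * (2*\<phi> - v * L) - 2*pi*real_of_int 0" unfolding del_def Le by simp
      have f2: "del \<noteq> 0" using dpos by simp
      have f3: "\<bar>del\<bar> < a" using dpos R1 by simp
      have f4: "L \<le> 20 * \<bar>del\<bar>" using dpos spx sp0 unfolding del_def Le v by simp
      show ?thesis using rot[OF eps a1 a2 tt s0(1) s3 L X _ f1 f2 f3 f4] by simp
    next
      case R2
      have f1: "del - 2*pi = real 1 * (2*\<phi> - v * L) - 2*pi*real_of_int 1" unfolding del_def Le by simp
      have f2: "del - 2*pi \<noteq> 0" using dlt by simp
      have ab: "\<bar>del - 2*pi\<bar> = 2*pi - del" using dlt by simp
      have f3: "\<bar>del - 2*pi\<bar> < a" using ab R2 by simp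
      have e2: "2*pi - del = 2*\<psi> + (19/10) * sin \<psi>" using dle by simp
      have "L \<le> 20 * (2*\<psi> + (19/10) * sin \<psi>)" unfolding Lp using ssx sp0' by simp
      then have f4: "L \<le> 20 * \<bar>del - 2*pi\<bar>" unfolding ab e2 .
      show ?thesis using rot[OF eps a1 a2 tt s0(1) s3 L X _ f1 f2 f3 f4] by simp
    next
      case R3
      have de: "del - pi = pi - 2*\<psi> - (19/10) * sin \<psi>" using dle by simp
      have far: "1/20 \<le> \<bar>del - pi\<bar>"
        using N
      proof
        assume "\<psi> < 7/10"
        then have "del - pi \<ge> 1/20" using de ssx pb by linarith
        then show ?thesis by simp
      next
        assume h: "22/25 < \<psi>"
        have "\<bar>sin \<psi> - sin (22/25)\<bar> \<le> \<bar>\<psi> - 22/25\<bar>" by (rule sin_lip)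
        then have "sin \<psi> \<ge> sin (22/25) - (\<psi> - 22/25)" using h by linarith
        then have "del - pi \<le> -1/20" using de sin_088 pb h by linarith
        then show ?thesis by simp
      qed
      have ab2: "\<bar>2*del - 2*pi\<bar> = 2 * \<bar>del - pi\<bar>" by (simp add: abs_if)
      have f1: "2*del - 2*pi = real 2 * (2*\<phi> - v * L) - 2*pi*real_of_int 1" unfolding del_def Le by simp
      have f2: "2*del - 2*pi \<noteq> 0" using far by auto
      have "\<bar>del - pi\<bar> \<le> pi - a" using R3 by linarith
      then have h2: "2 * \<bar>del - pi\<bar> \<le> 2*pi - 2*a" by simp
      have "2*pi - 2*a < a" using a1 pi_gt_zero by linarith
      then have f3: "\<bar>2*del - 2*pi\<bar> < a" unfolding ab2 using h2 by simp
      have "2 \<le> 20 * (2 * \<bar>del - pi\<bar>)" using far by simp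
      then have f4: "L \<le> 20 * \<bar>2*del - 2*pi\<bar>" unfolding ab2 using order_trans[OF L(2)] by blast
      show ?thesis using rot[OF eps a1 a2 tt s0(1) s3 L X _ f1 f2 f3 f4] by simp
    qed
  qed
qed


lemma gliding_hit:
  fixes x :: "real \<Rightarrow> complex"
  assumes eps: "0 < \<epsilon>" and a1: "4*pi/5 < a" and a2: "a < pi" and tt: "2*pi < t0"
    and v: "v = 19/20" and g: "gliding_ray x"
  shows "\<exists>t\<in>{0<..<t0+200}. (t, x t) \<in> moving_set \<epsilon> a t0 v"
proof -
  note pb = pi_bnds
  obtain c sg where sg: "sg = 1 \<or> sg = -1" and xe: "\<forall>t. x t = cis (c + sg * t)"
    using g unfolding gliding_ray_def by blast
  have X: "\<forall>k::nat. x (1 + real k * 1) = cis ((c + sg) + real k * sg)"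
    using xe by (simp add: algebra_simps)
  have L: "(0::real) < 1" "(1::real) \<le> 2" by simp_all
  have s: "(0::real) < 1" "(1::real) \<le> 3" by simp_all
  have f1: "sg - v = real 1 * (sg - v * 1) - 2*pi*real_of_int 0" by simp
  have f2: "sg - v \<noteq> 0" using sg v by auto
  have f3: "\<bar>sg - v\<bar> < a" using sg v a1 pb by auto
  have f4: "1 \<le> 20 * \<bar>sg - v\<bar>" using sg v by auto
  show ?thesis using rot[OF eps a1 a2 tt s L X _ f1 f2 f3 f4] by simp
qed

theorem proposition3p3:
  fixes \<epsilon> a t0 :: real
  assumes "0 < \<epsilon>" "\<epsilon> < 1" "4 * pi / 5 < a" "a < pi" "t0 > 2 * pi"
  shows "\<exists>v. 0 < v \<and> v < 1 \<and> T0 (moving_set \<epsilon> a t0 v) < \<infinity>"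
proof -
  define v :: real where "v = 19/20"
  have a1: "4*pi/5 < a" using assms by simp
  have G: "GCC (moving_set \<epsilon> a t0 v) (t0 + 200)"
    unfolding GCC_def
  proof (intro allI impI)
    fix x :: "real \<Rightarrow> complex"
    assume "ray x"
    then consider (B) "billiard_ray x" | (Gl) "gliding_ray x" unfolding ray_def by blast
    then show "\<exists>t\<in>{0<..<t0 + 200}. (t, x t) \<in> moving_set \<epsilon> a t0 v"
    proof cases
      case B
      then obtain s L \<gamma> \<phi> where h: "0 < \<phi>" "\<phi> < pi" "L = 2 * sin \<phi>" "0 < s" "s \<le> L"
        "\<forall>k::nat. x (s + real k * L) = cis (\<gamma> + real k * (2*\<phi>))"
        using billiard_structure by blast
      show ?thesis by (rule billiard_hit[OF assms(1) a1 assms(4) assms(5) v_def h])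
    next
      case Gl
      show ?thesis by (rule gliding_hit[OF assms(1) a1 assms(4) assms(5) v_def Gl])
    qed
  qed
  have pos: "0 < t0 + 200" using assms(5) pi_gt_zero by linarith
  have "T0 (moving_set \<epsilon> a t0 v) \<le> ereal (t0 + 200)"
    unfolding T0_def by (rule Inf_lower) (use G pos in auto)
  then have "T0 (moving_set \<epsilon> a t0 v) < \<infinity>" by (rule le_less_trans) simp
  then show ?thesis unfolding v_def by (intro exI[of _ "19/20"]) simp
qed

end
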